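(* Let $d\ge 1$, $\bar{\alpha}>2$ and $\beta_k>0$. Consider the hierarchical model for a random vector $\mathbf{x}_k\in\mathbb{R}^d$ in which $\gamma_k>0$ follows a Gamma distribution with shape $\bar{\alpha}$ and rate $\beta_k$ (density $\frac{\beta_k^{\bar\alpha}}{\Gamma(\bar\alpha)}\gamma_k^{\bar\alpha-1}e^{-\beta_k\gamma_k}$), and, conditionally on $\gamma_k$, $\mathbf{x}_k$ has the probability density $p(\mathbf{x}_k\mid\gamma_k)= c_d\,\gamma_k^d\exp\left(-\gamma_k\|\mathbf{x}_k\|_2\right)$, where $\|\cdot\|_2$ is the Euclidean norm and $c_d>0$ is the normalizing constant (independent of $\gamma_k$). Then the marginal density of $\mathbf{x}_k$ satisfies $p(\mathbf{x}_k)\propto(\beta_k+\|\mathbf{x}_k\|_2)^{-(\bar\alpha+d)}$, and $$\mathbb{E}\left[\mathbf{x}_k\mathbf{x}_k^\top\right]=\frac{(d+1)\beta_k^2}{(\bar\alpha-1)(\bar\alpha-2)}I_d .$$ Consequently, for given $\mathrm{SNR}>1$, positive semidefinite nonzero $\Gamma_\xi\in\mathbb{R}^{m\times m}$, integer $q\ge1$ and nonzero $L_k\in\mathbb{R}^{m\times d}$, the requirement $\mathbb{E}[\mathbf{x}_k\mathbf{x}_k^\top]=\theta_k I_d$ with $\theta_k=\frac{(\mathrm{SNR}-1)\,\mathrm{trace}(\Gamma_\xi)}{q\|L_k\|_F^2}$ holds if and only if $$\beta_k=\sqrt{\frac{(\bar\alpha-1)(\bar\alpha-2)(\mathrm{S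NR}-1)\,\mathrm{trace}(\Gamma_\xi)}{(d+1)q\|L_k\|_F^2}}.$$
   Context: $\|\cdot\|_F$ denotes the Frobenius norm and $I_d$ the $d\times d$ identity matrix. In the application, $L_k$ is the block of $d$ columns of an EEG lead field matrix associated with source location $k$, $\Gamma_\xi$ is the measurement noise covariance, $q$ is the number of active sources, and $\theta_k$ is the prior variance prescribed by a signal-to-noise-ratio-based sensitivity weighting. *)

theory Defs
  imports "HOL-Analysis.Analysis"
begin

definition gamma_pdf :: "real \<Rightarrow> real \<Rightarrow> real \<Rightarrow> real" where
  "gamma_pdf a b g = (if g > 0 then b powr a / Gamma a * g powr (a - 1) * exp (- b * g) else 0)"

definition cnorm :: "('d::finite) itself \<Rightarrow> real" where
  "cnorm _ = 1 / (\<integral>x. exp (- norm (x :: real^'d)) \<partial>lborel)"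

definition cond_pdf :: "real \<Rightarrow> real^'d \<Rightarrow> real" where
  "cond_pdf g x = cnorm TYPE('d) * g ^ CARD('d) * exp (- g * norm x)"

definition marg_pdf :: "real \<Rightarrow> real \<Rightarrow> real^'d::finite \<Rightarrow> real" where
  "marg_pdf a b x = (\<integral>g. gamma_pdf a b g * cond_pdf g x \<partial>lborel)"

definition second_moment :: "real \<Rightarrow> real \<Rightarrow> 'd::finite \<Rightarrow> 'd \<Rightarrow> real" where
  "second_moment a b i j = (\<integral>x. (x $ i) * (x $ j) * marg_pdf a b (x :: real^'d) \<partial>lborel)"

definition frob_norm :: "real^'n^'m \<Rightarrow> real" where
  "frob_norm A = sqrt (\<Sum>i\<in>UNIV. \<Sum>j\<in>UNIV. (A $ i $ j)^2)"

definition psd :: "real^'m^'m \<Rightarrow> bool" where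
  "psd A \<longleftrightarrow> transpose A = A \<and> (\<forall>v. v \<bullet> (A *v v) \<ge> 0)"

end

theory Submission
  imports Defs
begin
lemma Basis_cart_range: "(Basis :: (real^'n) set) = range (\<lambda>k. axis k (1::real))"
  by (auto simp: Basis_vec_def)

lemma prod_Basis_cart: "(\<Prod>b\<in>(Basis :: (real^'n) set). f b) = (\<Prod>k\<in>UNIV. f (axis k 1))"
  unfolding Basis_cart_range by (subst prod.reindex) (auto simp: inj_on_def axis_eq_axis)

lemma lborel_cart_eqI:
  fixes M :: "(real^'n) measure"
  assumes "\<And>l u. (\<And>k. l $ k \<le> u $ k) \<Longrightarrow> emeasure M (box l u) = (\<Prod>k\<in>UNIV. u $ k - l $ k)"
  assumes "sets M = sets borel"
  shows "lborel = M"
proof (rule lborel_eqI)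
  fix l u :: "real^'n" assume H: "\<And>b. b \<in> Basis \<Longrightarrow> l \<bullet> b \<le> u \<bullet> b"
  have "\<And>k. l $ k \<le> u $ k" using H by (auto simp: Basis_cart_range cart_eq_inner_axis)
  then show "emeasure M (box l u) = (\<Prod>b\<in>Basis. (u - l) \<bullet> b)"
    using assms(1) by (simp add: prod_Basis_cart cart_eq_inner_axis[symmetric])
qed (fact assms(2))

lemma emeasure_lborel_box_cart:
  fixes l u :: "real^'n"
  assumes "\<And>k. l $ k \<le> u $ k"
  shows "emeasure lborel (box l u) = (\<Prod>k\<in>UNIV. u $ k - l $ k)"
proof -
  have "\<And>b. b \<in> Basis \<Longrightarrow> l \<bullet> b \<le> u \<bullet> b"
    using assms by (auto simp: Basis_cart_range cart_eq_inner_axis[symmetric])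
  then show ?thesis by (simp add: prod_Basis_cart cart_eq_inner_axis[symmetric])
qed

definition sw :: "'a \<Rightarrow> 'a \<Rightarrow> 'a \<Rightarrow> 'a" where
  "sw i j k = (if k = i then j else if k = j then i else k)"

lemma sw_sw[simp]: "sw i j (sw i j k) = k" by (auto simp: sw_def)

lemma bij_sw: "bij (sw i j)"
  by (metis bij_betw_byWitness sw_sw subset_UNIV surj_def)

definition swapv :: "'d \<Rightarrow> 'd \<Rightarrow> real^'d \<Rightarrow> real^'d" where
  "swapv i j x = (\<chi> k. x $ sw i j k)"

definition reflv :: "'d \<Rightarrow> real^'d \<Rightarrow> real^'d" where
  "reflv i x = (\<chi> k. (if k = i then -1 else 1) * x $ k)"

lemma swapv_measurable[measurable]: "swapv i j \<in> borel_measurable borel"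
  unfolding swapv_def by (intro borel_measurable_continuous_onI continuous_intros)

lemma reflv_measurable[measurable]: "reflv i \<in> borel_measurable borel"
  unfolding reflv_def 
  by (intro borel_measurable_continuous_onI continuous_on_vec_lambda continuous_intros)

lemma lborel_swapv: "distr lborel borel (swapv i j) = (lborel :: (real^'d) measure)"
proof (rule lborel_cart_eqI[symmetric])
  fix l u :: "real^'d" assume le: "\<And>k. l $ k \<le> u $ k"
  have "swapv i j -` box l u = box (swapv i j l) (swapv i j u)"
  proof (rule set_eqI)
    fix x
    have "(\<forall>k. l $ k < x $ sw i j k \<and> x $ sw i j k < u $ k) \<longleftrightarrow> (\<forall>k. l $ sw i j k < x $ k \<and> x $ k < u $ sw i j k)"
      by (metis sw_sw)
    then show "x \<in> swapv i j -` box l u \<longleftrightarrow> x \<in> box (swapv i j l) (swapv i j u)"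
      by (simp add: mem_box_cart swapv_def)
  qed
  then have "emeasure (distr lborel borel (swapv i j)) (box l u) = emeasure lborel (box (swapv i j l) (swapv i j u))"
    by (simp add: emeasure_distr)
  also have "\<dots> = (\<Prod>k\<in>UNIV. u $ sw i j k - l $ sw i j k)"
    using le by (subst emeasure_lborel_box_cart) (auto simp: swapv_def)
  also have "\<dots> = (\<Prod>k\<in>UNIV. u $ k - l $ k)"
    using prod.reindex[of "sw i j" UNIV "\<lambda>k. u $ k - l $ k"] bij_sw[of i j]
    by (simp add: bij_def o_def)
  finally show "emeasure (distr lborel borel (swapv i j)) (box l u) = (\<Prod>k\<in>UNIV. u $ k - l $ k)" .
qed simp

lemma lborel_reflv: "distr lborel borel (reflv i) = (lborel :: (real^'d) measure)"
proof (rule lborel_cart_eqI[symmetric])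
  fix l u :: "real^'d" assume le: "\<And>k. l $ k \<le> u $ k"
  define l' where "l' = (\<chi> k. if k = i then - u $ k else l $ k)"
  define u' where "u' = (\<chi> k. if k = i then - l $ k else u $ k)"
  have c: "(l$k < (reflv i x)$k \<and> (reflv i x)$k < u$k) \<longleftrightarrow> (l'$k < x$k \<and> x$k < u'$k)" for x k
    by (cases "k = i") (auto simp: reflv_def l'_def u'_def)
  have "reflv i -` box l u = box l' u'"
    unfolding set_eq_iff mem_box_cart vimage_eq c by simp
  then have "emeasure (distr lborel borel (reflv i)) (box l u) = emeasure lborel (box l' u')"
    by (simp add: emeasure_distr)
  also have "\<dots> = (\<Prod>k\<in>UNIV. u' $ k - l' $ k)"
    using le by (subst emeasure_lborel_box_cart) (auto simp: l'_def u'_def)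
  also have "\<dots> = (\<Prod>k\<in>UNIV. u $ k - l $ k)"
    by (rule arg_cong[where f=ennreal], rule prod.cong) (auto simp: l'_def u'_def)
  finally show "emeasure (distr lborel borel (reflv i)) (box l u) = (\<Prod>k\<in>UNIV. u $ k - l $ k)" .
qed simp

lemma nn_scale:
  fixes f :: "real^'d \<Rightarrow> ennreal"
  assumes c: "c > 0" and [measurable]: "f \<in> borel_measurable borel"
  shows "(\<integral>\<^sup>+x. f x \<partial>lborel) = ennreal (c ^ CARD('d)) * (\<integral>\<^sup>+x. f (c *\<^sub>R x) \<partial>lborel)"
proof -
  have "(lborel::(real^'d) measure) = density (distr lborel borel (\<lambda>x. 0 + c *\<^sub>R x)) (\<lambda>_. \<bar>c\<bar>^DIM(real^'d))"
    by (rule lborel_affine) (use c in simp)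
  also have "\<dots> = density (distr lborel borel (\<lambda>x. c *\<^sub>R x)) (\<lambda>_. ennreal (c ^ CARD('d)))"
    using c by simp
  finally have eq: "(lborel::(real^'d) measure) = density (distr lborel borel (\<lambda>x. c *\<^sub>R x)) (\<lambda>_. ennreal (c ^ CARD('d)))" .
  have "(\<integral>\<^sup>+x. f x \<partial>lborel) = (\<integral>\<^sup>+x. f x \<partial>(density (distr lborel borel (\<lambda>x. c *\<^sub>R x)) (\<lambda>_. ennreal (c ^ CARD('d)))))"
    by (rule arg_cong[where f="\<lambda>M. \<integral>\<^sup>+x. f x \<partial>M", OF eq])
  also have "\<dots> = ennreal (c ^ CARD('d)) * (\<integral>\<^sup>+x. f (c *\<^sub>R x) \<partial>lborel)"
    using c by (simp add: nn_integral_density nn_integral_distr nn_integral_cmult)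
  finally show ?thesis .
qed

lemma FTC_exp:
  assumes r: "r > 0"
  shows "(\<integral>\<^sup>+u. ennreal (r ^ Suc k * exp (- u * r)) * indicator {1..} u \<partial>lborel) = ennreal (r ^ k * exp (- r))"
proof -
  have "(\<integral>\<^sup>+u. ennreal (r ^ Suc k * exp (- u * r)) * indicator {1..} u \<partial>lborel) = ennreal (0 - (- (r ^ k * exp (- 1 * r))))"
  proof (rule nn_integral_FTC_atLeast)
    show "(\<lambda>u. r ^ Suc k * exp (- u * r)) \<in> borel_measurable borel" by measurable
    fix u :: real
    show "((\<lambda>u. - (r ^ k * exp (- u * r))) has_real_derivative r ^ Suc k * exp (- u * r)) (at u)"
      by (auto intro!: derivative_eq_intros simp: algebra_simps)
    show "0 \<le> r ^ Suc k * exp (- u * r)" using r by simp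
  next
    have "LIM u at_top. r * u :> at_top"
      by (rule filterlim_tendsto_pos_mult_at_top[OF tendsto_const r filterlim_ident])
    then have "LIM u at_top. - (r * u) :> at_bot"
      using filterlim_uminus_at_top by auto
    then have "((\<lambda>u. exp (- (r * u))) \<longlongrightarrow> 0) at_top"
      using exp_at_bot filterlim_compose by blast
    then have "((\<lambda>u. exp (- u * r)) \<longlongrightarrow> 0) at_top"
      by (simp add: mult.commute)
    then have "((\<lambda>u. r ^ k * exp (- u * r)) \<longlongrightarrow> 0) at_top"
      by (rule tendsto_mult_right_zero)
    then have "((\<lambda>u. - (r ^ k * exp (- u * r))) \<longlongrightarrow> - 0) at_top"
      by (rule tendsto_minus)
    then show "((\<lambda>u. - (r ^ k * exp (- u * r))) \<longlongrightarrow> 0) at_top" by simp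
  qed
  then show ?thesis by simp
qed

lemma FTC_pow:
  assumes n: "n > 0"
  shows "(\<integral>\<^sup>+u. ennreal (u powr (- real (Suc n))) * indicator {1..} u \<partial>lborel) = ennreal (1 / real n)"
proof -
  have "(\<integral>\<^sup>+u. ennreal (u powr (- real (Suc n))) * indicator {1..} u \<partial>lborel) = ennreal (0 - (- (1 powr (- real n)) / real n))"
  proof (rule nn_integral_FTC_atLeast)
    show "(\<lambda>u. u powr (- real (Suc n))) \<in> borel_measurable borel" by measurable
    fix u :: real assume u: "1 \<le> u"
    show "((\<lambda>u. - (u powr (- real n)) / real n) has_real_derivative u powr (- real (Suc n))) (at u)"
      using u n apply (auto intro!: derivative_eq_intros simp: field_simps)
      by (rule arg_cong[where f="\<lambda>e. u powr e"]) simp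
    show "0 \<le> u powr (- real (Suc n))" by simp
  next
    have "((\<lambda>u. u powr (- real n)) \<longlongrightarrow> 0) at_top"
      using n by (intro tendsto_neg_powr filterlim_ident) auto
    then have "((\<lambda>u. u powr (- real n) / real n) \<longlongrightarrow> 0) at_top"
      by (rule tendsto_divide_zero)
    then have "((\<lambda>u. - (u powr (- real n) / real n)) \<longlongrightarrow> - 0) at_top"
      by (rule tendsto_minus)
    then show "((\<lambda>u. - (u powr (- real n)) / real n) \<longlongrightarrow> 0) at_top" by simp
  qed
  then show ?thesis by simp
qed

definition Zk :: "('d::finite) itself \<Rightarrow> nat \<Rightarrow> ennreal" where
  "Zk _ k = (\<integral>\<^sup>+x. ennreal (norm (x::real^'d) ^ k * exp (- norm x)) \<partial>lborel)"

lemma Zk_scaled: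
  assumes t: "t > 0"
  shows "Zk TYPE('d::finite) k = ennreal (t ^ (CARD('d) + k)) * (\<integral>\<^sup>+x. ennreal (norm (x::real^'d) ^ k * exp (- t * norm x)) \<partial>lborel)"
proof -
  have "Zk TYPE('d::finite) k = ennreal (t ^ CARD('d)) * (\<integral>\<^sup>+x. ennreal (norm (t *\<^sub>R (x::real^'d)) ^ k * exp (- norm (t *\<^sub>R x))) \<partial>lborel)"
    unfolding Zk_def by (rule nn_scale[OF t]) measurable
  also have "(\<lambda>x::real^'d. ennreal (norm (t *\<^sub>R x) ^ k * exp (- norm (t *\<^sub>R x)))) = (\<lambda>x. ennreal (t ^ k) * ennreal (norm x ^ k * exp (- t * norm x)))"
  proof
    fix x :: "real^'d"
    have "norm (t *\<^sub>R x) ^ k * exp (- norm (t *\<^sub>R x)) = t ^ k * (norm x ^ k * exp (- t * norm x))"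
      using t by (simp add: power_mult_distrib)
    then show "ennreal (norm (t *\<^sub>R x) ^ k * exp (- norm (t *\<^sub>R x))) = ennreal (t ^ k) * ennreal (norm x ^ k * exp (- t * norm x))"
      using t by (simp add: ennreal_mult' mult.assoc)
  qed
  also have "ennreal (t ^ CARD('d)) * (\<integral>\<^sup>+x. ennreal (t ^ k) * ennreal (norm (x::real^'d) ^ k * exp (- t * norm x)) \<partial>lborel)
     = ennreal (t ^ CARD('d)) * (ennreal (t ^ k) * (\<integral>\<^sup>+x. ennreal (norm (x::real^'d) ^ k * exp (- t * norm x)) \<partial>lborel))"
    by (simp add: nn_integral_cmult)
  also have "\<dots> = ennreal (t ^ (CARD('d) + k)) * (\<integral>\<^sup>+x. ennreal (norm (x::real^'d) ^ k * exp (- t * norm x)) \<partial>lborel)"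
    using t by (simp add: power_add ennreal_mult' mult.assoc)
  finally show ?thesis .
qed

lemma Zk_scaled':
  assumes t: "t > 0"
  shows "(\<integral>\<^sup>+x. ennreal (norm (x::real^'d) ^ k * exp (- t * norm x)) \<partial>lborel) = Zk TYPE('d::finite) k * ennreal (t powr (- real (CARD('d) + k)))"
proof -
  have "Zk TYPE('d::finite) k * ennreal (t powr (- real (CARD('d) + k))) = 
     (\<integral>\<^sup>+x. ennreal (norm (x::real^'d) ^ k * exp (- t * norm x)) \<partial>lborel) * (ennreal (t ^ (CARD('d) + k)) * ennreal (t powr (- real (CARD('d) + k))))"
    unfolding Zk_scaled[OF t, of k] by (simp add: mult_ac)
  also have "ennreal (t ^ (CARD('d) + k)) * ennreal (t powr (- real (CARD('d) + k))) = 1"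
    using t by (simp add: ennreal_mult'[symmetric] powr_minus powr_realpow[symmetric] del: of_nat_add)
  finally show ?thesis by simp
qed

lemma pair_lb: "pair_sigma_finite (lborel::('a::euclidean_space) measure) (lborel::('b::euclidean_space) measure)"
  by (simp add: pair_sigma_finite_def lborel.sigma_finite_measure_axioms)

lemmas Fub = pair_sigma_finite.Fubini'[OF pair_lb]

lemma Zk_rec:
  "Zk TYPE('d::finite) k = Zk TYPE('d::finite) (Suc k) * ennreal (1 / real (CARD('d) + k))"
proof -
  have "Zk TYPE('d::finite) k = (\<integral>\<^sup>+x. (\<integral>\<^sup>+u. ennreal (norm (x::real^'d) ^ Suc k * exp (- u * norm x)) * indicator {1..} u \<partial>lborel) \<partial>lborel)"
    unfolding Zk_def
  proof (rule nn_integral_cong_AE)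
    show "AE x in lborel. ennreal (norm (x::real^'d) ^ k * exp (- norm x)) = (\<integral>\<^sup>+u. ennreal (norm x ^ Suc k * exp (- u * norm x)) * indicator {1..} u \<partial>lborel)"
      using AE_lborel_singleton[of "0::real^'d"] by eventually_elim (rule FTC_exp[symmetric], simp)
  qed
  also have "\<dots> = (\<integral>\<^sup>+u. (\<integral>\<^sup>+x. ennreal (norm (x::real^'d) ^ Suc k * exp (- u * norm x)) * indicator {1..} u \<partial>lborel) \<partial>lborel)"
    by (rule Fub[symmetric]) measurable
  also have "\<dots> = (\<integral>\<^sup>+u. Zk TYPE('d::finite) (Suc k) * (ennreal (u powr (- real (Suc (CARD('d) + k)))) * indicator {1..} u) \<partial>lborel)"
  proof (rule nn_integral_cong)
    fix u :: real
    show "(\<integral>\<^sup>+x. ennreal (norm (x::real^'d) ^ Suc k * exp (- u * norm x)) * indicator {1..} u \<partial>lborel) = Zk TYPE('d::finite) (Suc k) * (ennreal (u powr (- real (Suc (CARD('d) + k)))) * indicator {1..} u)"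
    proof (cases "u \<ge> 1")
      case True
      then show ?thesis using Zk_scaled'[of u "Suc k", where 'd='d] by (simp add: nn_integral_multc mult.assoc)
    qed simp
  qed
  also have "\<dots> = Zk TYPE('d::finite) (Suc k) * (\<integral>\<^sup>+u. ennreal (u powr (- real (Suc (CARD('d) + k)))) * indicator {1..} u \<partial>lborel)"
    by (rule nn_integral_cmult) measurable
  also have "(\<integral>\<^sup>+u. ennreal (u powr (- real (Suc (CARD('d) + k)))) * indicator {1..} u \<partial>lborel) = ennreal (1 / real (CARD('d) + k))"
    by (rule FTC_pow) simp
  finally show ?thesis .
qed

lemma FTC_exp0:
  fixes a :: real
  shows "(\<integral>\<^sup>+s. ennreal (exp (- s)) * indicator {a..} s \<partial>lborel) = ennreal (exp (- a))"
proof -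
  have "(\<integral>\<^sup>+s. ennreal (exp (- s)) * indicator {a..} s \<partial>lborel) = ennreal (0 - (- exp (- a)))"
  proof (rule nn_integral_FTC_atLeast)
    fix s :: real
    have "((\<lambda>s. exp (- s)) has_real_derivative exp (- s) * (- 1)) (at s)"
      by (intro DERIV_fun_exp DERIV_minus DERIV_ident)
    then have "((\<lambda>s. - exp (- s)) has_real_derivative - (exp (- s) * (- 1))) (at s)"
      by (rule DERIV_minus)
    then show "((\<lambda>s. - exp (- s)) has_real_derivative exp (- s)) (at s)"
      by (rule DERIV_cong) simp
  next
    have "((\<lambda>s::real. exp (- s)) \<longlongrightarrow> (0::real)) at_top"
      using filterlim_compose[of exp "nhds 0" at_bot uminus at_top, OF exp_at_bot filterlim_uminus_at_bot_at_top] by simp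
    then have "((\<lambda>s::real. - exp (- s)) \<longlongrightarrow> - (0::real)) at_top" by (rule tendsto_minus)
    then show "((\<lambda>s::real. - exp (- s)) \<longlongrightarrow> (0::real)) at_top" by simp
  qed auto
  then show ?thesis by simp
qed

lemma Z0_val: "Zk TYPE('d::finite) 0 = ennreal (unit_ball_vol (real CARD('d)) * fact CARD('d))"
proof -
  define V where "V = unit_ball_vol (real CARD('d))"
  have "Zk TYPE('d) 0 = (\<integral>\<^sup>+x. (\<integral>\<^sup>+s. ennreal (exp (- s)) * indicator {norm (x::real^'d)..} s \<partial>lborel) \<partial>lborel)"
    unfolding Zk_def FTC_exp0 by simp
  also have "\<dots> = (\<integral>\<^sup>+x. (\<integral>\<^sup>+s. (if norm (x::real^'d) \<le> s then ennreal (exp (- s)) else 0) \<partial>lborel) \<partial>lborel)"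
    by (intro nn_integral_cong) (auto simp: indicator_def)
  also have "\<dots> = (\<integral>\<^sup>+s. (\<integral>\<^sup>+x. (if norm (x::real^'d) \<le> s then ennreal (exp (- s)) else 0) \<partial>lborel) \<partial>lborel)"
    by (rule Fub[symmetric]) measurable
  also have "\<dots> = (\<integral>\<^sup>+s. (\<integral>\<^sup>+x. ennreal (exp (- s)) * indicator (cball 0 s) (x::real^'d) \<partial>lborel) \<partial>lborel)"
    by (intro nn_integral_cong) (auto simp: indicator_def)
  also have "\<dots> = (\<integral>\<^sup>+s. ennreal V * ennreal (indicator {0..} s * s powr (real (CARD('d) + 1) - 1) / exp s) \<partial>lborel)"
  proof (intro nn_integral_cong)
    fix s :: real
    show "(\<integral>\<^sup>+x. ennreal (exp (- s)) * indicator (cball 0 s) (x::real^'d) \<partial>lborel) = ennreal V * ennreal (indicator {0..} s * s powr (real (CARD('d) + 1) - 1) / exp s)"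
    proof (cases "s \<ge> 0")
      case True
      have pw: "s powr (real (CARD('d) + 1) - 1) = s ^ CARD('d)"
      proof (cases "s = 0")
        case True then show ?thesis by simp
      next
        case False then show ?thesis using \<open>s \<ge> 0\<close> by (simp add: powr_realpow)
      qed
      have pw': "s powr (real CARD('d)) = s ^ CARD('d)" using pw by simp
      have "(\<integral>\<^sup>+x. ennreal (exp (- s)) * indicator (cball 0 s) (x::real^'d) \<partial>lborel) = ennreal (exp (- s)) * emeasure lborel (cball (0::real^'d) s)"
        by (rule nn_integral_cmult_indicator) simp
      also have "\<dots> = ennreal (exp (- s)) * ennreal (V * s ^ CARD('d))"
        using emeasure_cball[OF True, of "0::real^'d"] by (simp add: V_def)
      also have "\<dots> = ennreal V * ennreal (indicator {0..} s * s powr (real (CARD('d) + 1) - 1) / exp s)"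
        using True by (simp add: pw pw' ennreal_mult'[symmetric] V_def exp_minus field_simps del: of_nat_add)
      finally show ?thesis .
    qed simp
  qed
  also have "\<dots> = ennreal V * ennreal (Gamma (real (CARD('d) + 1)))"
  proof -
    have G: "Gamma (real (CARD('d) + 1)) = nn_integral lborel (\<lambda>t. ennreal (indicator {0..} t * t powr (real (CARD('d) + 1) - 1) / exp t))"
      by (rule Gamma_conv_nn_integral_real) simp
    show ?thesis
      by (subst nn_integral_cmult) (measurable, subst G, rule refl)
  qed
  also have "\<dots> = ennreal (V * fact CARD('d))"
  proof -
    have "Gamma (1 + real CARD('d)) = (fact CARD('d) :: real)" by (rule Gamma_fact)
    then show ?thesis by (simp add: ennreal_mult' V_def)
  qed
  finally show ?thesis by (simp add: V_def)
qed

definition zz :: "('d::finite) itself \<Rightarrow> real" where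
  "zz _ = unit_ball_vol (real CARD('d)) * fact CARD('d)"

lemma zz_pos: "zz TYPE('d::finite) > 0"
  unfolding zz_def by (intro mult_pos_pos unit_ball_vol_pos) auto

lemma Z0': "Zk TYPE('d::finite) 0 = ennreal (zz TYPE('d))"
  unfolding zz_def Z0_val ..

lemma Z1': "Zk TYPE('d::finite) 1 = ennreal (real CARD('d) * zz TYPE('d))"
proof -
  define c where "c = real (CARD('d) + 0)"
  have c: "c > 0" unfolding c_def by simp
  have R: "Zk TYPE('d) 0 = Zk TYPE('d) 1 * ennreal (1 / c)"
    using Zk_rec[of 0, where 'd='d] unfolding c_def One_nat_def .
  have "Zk TYPE('d) 0 * ennreal c = Zk TYPE('d) 1 * (ennreal (1 / c) * ennreal c)"
    by (simp only: R mult.assoc)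
  also have "ennreal (1 / c) * ennreal c = 1"
    using c by (simp add: ennreal_mult'[symmetric])
  finally have "Zk TYPE('d) 1 = ennreal (zz TYPE('d)) * ennreal c" by (simp add: Z0')
  then have "Zk TYPE('d) 1 = ennreal (zz TYPE('d) * c)"
    using zz_pos[where 'd='d] c by (simp add: ennreal_mult)
  then show ?thesis by (simp add: c_def algebra_simps)
qed

lemma Z2': "Zk TYPE('d::finite) 2 = ennreal (real CARD('d) * (real CARD('d) + 1) * zz TYPE('d))"
proof -
  define c where "c = real (CARD('d) + 1)"
  have c: "c > 0" unfolding c_def by simp
  have R: "Zk TYPE('d) 1 = Zk TYPE('d) 2 * ennreal (1 / c)"
    using Zk_rec[of 1, where 'd='d] unfolding c_def Suc_1 .
  have "Zk TYPE('d) 1 * ennreal c = Zk TYPE('d) 2 * (ennreal (1 / c) * ennreal c)"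
    by (simp only: R mult.assoc)
  also have "ennreal (1 / c) * ennreal c = 1"
    using c by (simp add: ennreal_mult'[symmetric])
  finally have "Zk TYPE('d) 2 = Zk TYPE('d) 1 * ennreal c" by simp
  then have "Zk TYPE('d) 2 = ennreal (real CARD('d) * zz TYPE('d)) * ennreal c" by (simp only: Z1')
  then have "Zk TYPE('d) 2 = ennreal (real CARD('d) * zz TYPE('d) * c)"
    using zz_pos[where 'd='d] c by (simp add: ennreal_mult)
  then show ?thesis by (simp add: c_def algebra_simps del: ennreal_plus)
qed

lemma integral_exp_norm: "(\<integral>x. exp (- norm (x::real^'d::finite)) \<partial>lborel) = zz TYPE('d)"
proof -
  have "(\<integral>x. exp (- norm (x::real^'d::finite)) \<partial>lborel) = enn2real (\<integral>\<^sup>+x. ennreal (exp (- norm (x::real^'d::finite))) \<partial>lborel)"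
    by (rule integral_eq_nn_integral) auto
  also have "(\<integral>\<^sup>+x. ennreal (exp (- norm (x::real^'d::finite))) \<partial>lborel) = Zk TYPE('d) 0"
    unfolding Zk_def by simp
  finally show ?thesis using zz_pos[where 'd='d] by (simp add: Z0')
qed

lemma cnorm_val: "cnorm TYPE('d::finite) = 1 / zz TYPE('d)"
  unfolding cnorm_def integral_exp_norm ..

definition gk :: "real \<Rightarrow> real \<Rightarrow> real \<Rightarrow> real" where
  "gk s l g = (if g > 0 then g powr (s - 1) * exp (- l * g) else 0)"

lemma gk_measurable[measurable]: "gk s l \<in> borel_measurable borel"
  unfolding gk_def by measurable

lemma gk_nonneg: "gk s l g \<ge> 0" unfolding gk_def by auto

lemma gk_nn:
  assumes s: "s > 0" and l: "l > 0"
  shows "(\<integral>\<^sup>+g. ennreal (gk s l g) \<partial>lborel) = ennreal (Gamma s * l powr (- s))"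
proof -
  have "ennreal (Gamma s) = (\<integral>\<^sup>+t. ennreal (indicator {0..} t * t powr (s - 1) / exp t) \<partial>lborel)"
    using Gamma_conv_nn_integral_real[OF s] by simp
  also have "\<dots> = ennreal \<bar>l\<bar> * (\<integral>\<^sup>+g. ennreal (indicator {0..} (0 + l * g) * (0 + l * g) powr (s - 1) / exp (0 + l * g)) \<partial>lborel)"
    by (rule nn_integral_real_affine) (use l in auto)
  also have "(\<lambda>g. ennreal (indicator {0..} (0 + l * g) * (0 + l * g) powr (s - 1) / exp (0 + l * g))) = (\<lambda>g. ennreal (l powr (s - 1)) * ennreal (gk s l g))"
  proof
    fix g :: real
    show "ennreal (indicator {0..} (0 + l * g) * (0 + l * g) powr (s - 1) / exp (0 + l * g)) = ennreal (l powr (s - 1)) * ennreal (gk s l g)"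
    proof (cases "g > 0")
      case True
      then show ?thesis using l
        by (simp add: gk_def ennreal_mult'[symmetric] powr_mult exp_minus field_simps zero_le_mult_iff)
    next
      case False
      then show ?thesis using l by (auto simp: gk_def indicator_def zero_le_mult_iff)
    qed
  qed
  finally have "ennreal (Gamma s) = ennreal l * (ennreal (l powr (s - 1)) * (\<integral>\<^sup>+g. ennreal (gk s l g) \<partial>lborel))"
    using l by (simp add: nn_integral_cmult)
  also have "\<dots> = ennreal (l powr s) * (\<integral>\<^sup>+g. ennreal (gk s l g) \<partial>lborel)"
    using l by (simp add: mult.assoc[symmetric] ennreal_mult'[symmetric] powr_diff field_simps)
  finally have "ennreal (l powr (- s)) * ennreal (Gamma s) = (ennreal (l powr (- s)) * ennreal (l powr s)) * (\<integral>\<^sup>+g. ennreal (gk s l g) \<partial>lborel)"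
    by (simp add: mult.assoc)
  also have "ennreal (l powr (- s)) * ennreal (l powr s) = 1"
    using l by (simp add: ennreal_mult'[symmetric] powr_minus)
  finally show ?thesis using l s by (simp add: ennreal_mult'[symmetric] mult.commute)
qed

lemma gk_int:
  assumes s: "s > 0" and l: "l > 0"
  shows "integrable lborel (gk s l)" "(\<integral>g. gk s l g \<partial>lborel) = Gamma s * l powr (- s)"
  using nn_integral_eq_integrable[of "gk s l" lborel "Gamma s * l powr (- s)"] gk_nn[OF s l] s l
  by (auto simp: gk_nonneg)

definition KK :: "('d::finite) itself \<Rightarrow> real \<Rightarrow> real \<Rightarrow> real" where
  "KK _ a b = b powr a / Gamma a * cnorm TYPE('d)"

lemma KK_pos: "a > 0 \<Longrightarrow> b > 0 \<Longrightarrow> KK TYPE('d::finite) a b > 0"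
  unfolding KK_def cnorm_val using zz_pos[where 'd='d] by simp

lemma integrand_eq:
  "gamma_pdf a b g * cond_pdf g (x::real^'d::finite) = KK TYPE('d) a b * gk (a + real CARD('d)) (b + norm x) g"
proof (cases "g > 0")
  case True
  have "g ^ CARD('d) = g powr real CARD('d)" using True by (simp add: powr_realpow)
  moreover have "g powr (a - 1) * g powr real CARD('d) = g powr (a + real CARD('d) - 1)"
    using True by (simp add: powr_add[symmetric] algebra_simps)
  moreover have "exp (- b * g) * exp (- g * norm x) = exp (- (b + norm x) * g)"
    by (simp add: exp_add[symmetric] algebra_simps)
  moreover have "gamma_pdf a b g * cond_pdf g x = (b powr a / Gamma a * cnorm TYPE('d)) * ((g powr (a - 1) * g ^ CARD('d)) * (exp (- b * g) * exp (- g * norm x)))"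
    using True unfolding gamma_pdf_def cond_pdf_def by (simp only: if_True mult_ac)
  ultimately show ?thesis using True
    unfolding gk_def KK_def by simp
next
  case False
  then show ?thesis by (simp add: gamma_pdf_def gk_def)
qed

lemma marg_val:
  assumes a: "a > 0" and b: "b > 0"
  shows "marg_pdf a b (x::real^'d::finite) = KK TYPE('d) a b * Gamma (a + real CARD('d)) * (b + norm x) powr (- (a + real CARD('d)))"
proof -
  have "marg_pdf a b x = (\<integral>g. KK TYPE('d) a b * gk (a + real CARD('d)) (b + norm x) g \<partial>lborel)"
    unfolding marg_pdf_def integrand_eq ..
  also have "\<dots> = KK TYPE('d) a b * (\<integral>g. gk (a + real CARD('d)) (b + norm x) g \<partial>lborel)"
    by (rule integral_mult_right_zero)
  also have "\<dots> = KK TYPE('d) a b * (Gamma (a + real CARD('d)) * (b + norm x) powr (- (a + real CARD('d))))"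
    using a b by (subst gk_int(2)) (auto intro: add_pos_nonneg)
  finally show ?thesis by (simp add: mult.assoc)
qed

lemma Gamma_rec2:
  assumes a: "a > (2::real)"
  shows "Gamma a = (a - 1) * (a - 2) * Gamma (a - 2)"
proof -
  have n1: "a - 2 \<notin> \<int>\<^sub>\<le>\<^sub>0" using a by auto
  have n2: "a - 1 \<notin> \<int>\<^sub>\<le>\<^sub>0" using a by auto
  have "Gamma (a - 2 + 1) = (a - 2) * Gamma (a - 2)" by (rule Gamma_plus1[OF n1])
  moreover have "a - 2 + 1 = a - 1" by simp
  ultimately have e1: "Gamma (a - 1) = (a - 2) * Gamma (a - 2)" by metis
  have "Gamma (a - 1 + 1) = (a - 1) * Gamma (a - 1)" by (rule Gamma_plus1[OF n2])
  moreover have "a - 1 + 1 = a" by simp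
  ultimately have e2: "Gamma a = (a - 1) * Gamma (a - 1)" by metis
  show ?thesis unfolding e2 e1 by (simp only: mult.assoc)
qed

lemma step1:
  assumes a: "a > 0" and b: "b > 0"
  shows "ennreal (norm x ^ 2 * marg_pdf a b (x::real^'d::finite)) =
    (\<integral>\<^sup>+g. ennreal (KK TYPE('d) a b * norm x ^ 2 * gk (a + real CARD('d)) (b + norm x) g) \<partial>lborel)"
proof -
  have bx: "b + norm x > 0" using b by (simp add: add_pos_nonneg)
  have K: "KK TYPE('d) a b > 0" using KK_pos a b by blast
  have "(\<integral>\<^sup>+g. ennreal (KK TYPE('d) a b * norm x ^ 2 * gk (a + real CARD('d)) (b + norm x) g) \<partial>lborel)
     = (\<integral>\<^sup>+g. ennreal (KK TYPE('d) a b * norm x ^ 2) * ennreal (gk (a + real CARD('d)) (b + norm x) g) \<partial>lborel)"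
    using K by (intro nn_integral_cong) (simp add: ennreal_mult gk_nonneg)
  also have "\<dots> = ennreal (KK TYPE('d) a b * norm x ^ 2) * ennreal (Gamma (a + real CARD('d)) * (b + norm x) powr (- (a + real CARD('d))))"
    using a bx by (simp add: nn_integral_cmult gk_nn add_pos_nonneg)
  also have "\<dots> = ennreal (norm x ^ 2 * marg_pdf a b x)"
    using K a b by (simp add: marg_val ennreal_mult[symmetric] mult_ac)
  finally show ?thesis ..
qed

lemma step3:
  assumes a: "a > 2" and b: "b > 0"
  shows "(\<integral>\<^sup>+x. ennreal (KK TYPE('d::finite) a b * norm (x::real^'d) ^ 2 * gk (a + real CARD('d)) (b + norm x) g) \<partial>lborel)
    = ennreal (KK TYPE('d) a b * (real CARD('d) * (real CARD('d) + 1) * zz TYPE('d))) * ennreal (gk (a - 2) b g)"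
proof (cases "g > 0")
  case False then show ?thesis by (simp add: gk_def)
next
  case True
  define D where "D = real CARD('d)"
  define K where "K = KK TYPE('d) a b"
  have K: "K > 0" unfolding K_def using a b by (intro KK_pos) auto
  have "(\<integral>\<^sup>+x. ennreal (K * norm (x::real^'d) ^ 2 * gk (a + D) (b + norm x) g) \<partial>lborel)
     = (\<integral>\<^sup>+x. ennreal (K * g powr (a + D - 1) * exp (- b * g)) * ennreal (norm (x::real^'d) ^ 2 * exp (- g * norm x)) \<partial>lborel)"
  proof (intro nn_integral_cong)
    fix x :: "real^'d"
    have eq: "K * norm x ^ 2 * gk (a + D) (b + norm x) g = (K * g powr (a + D - 1) * exp (- b * g)) * (norm x ^ 2 * exp (- g * norm x))"
      using True by (simp add: gk_def algebra_simps exp_add[symmetric])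
    show "ennreal (K * norm x ^ 2 * gk (a + D) (b + norm x) g) = ennreal (K * g powr (a + D - 1) * exp (- b * g)) * ennreal (norm x ^ 2 * exp (- g * norm x))"
      unfolding eq by (rule ennreal_mult) (use K in auto)
  qed
  also have "\<dots> = ennreal (K * g powr (a + D - 1) * exp (- b * g)) * (Zk TYPE('d) 2 * ennreal (g powr (- real (CARD('d) + 2))))"
  proof -
    have I: "(\<integral>\<^sup>+x. ennreal (norm (x::real^'d) ^ 2 * exp (- g * norm x)) \<partial>lborel) = Zk TYPE('d) 2 * ennreal (g powr (- real (CARD('d) + 2)))"
      by (rule Zk_scaled'[OF True])
    show ?thesis unfolding I[symmetric] by (rule nn_integral_cmult) measurable
  qed
  also have "\<dots> = ennreal (K * g powr (a + D - 1) * exp (- b * g) * (D * (D + 1) * zz TYPE('d)) * g powr (- (D + 2)))"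
  proof -
    have pe: "g powr (- 2 - real CARD('d)) = g powr (- real CARD('d) - 2)"
      by (rule arg_cong[where f="\<lambda>e. g powr e"]) simp
    show ?thesis
      using K zz_pos[where 'd='d] by (simp add: Z2' ennreal_mult[symmetric] D_def mult.assoc pe del: ennreal_plus)
  qed
  also have "K * g powr (a + D - 1) * exp (- b * g) * (D * (D + 1) * zz TYPE('d)) * g powr (- (D + 2))
     = (K * (D * (D + 1) * zz TYPE('d))) * (g powr (a + D - 1) * g powr (- (D + 2)) * exp (- b * g))"
    by (simp add: mult_ac)
  also have "g powr (a + D - 1) * g powr (- (D + 2)) = g powr (a - 2 - 1)"
    using True by (simp add: powr_add[symmetric] algebra_simps)
  also have "ennreal (K * (D * (D + 1) * zz TYPE('d)) * (g powr (a - 2 - 1) * exp (- b * g))) = ennreal (K * (D * (D + 1) * zz TYPE('d))) * ennreal (gk (a - 2) b g)"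
    using True K zz_pos[where 'd='d] by (simp add: gk_def ennreal_mult[symmetric] D_def)
  finally show ?thesis by (simp add: K_def D_def)
qed

lemma marg_arith:
  assumes a: "a > (2::real)" and b: "b > 0" and z: "z > 0"
  shows "b powr a / Gamma a * (1 / z) * (D * (D + 1) * z) * (Gamma (a - 2) * b powr (- (a - 2)))
       = D * (D + 1) * b ^ 2 / ((a - 1) * (a - 2))"
proof -
  have bp: "b powr a * b powr (- (a - 2)) = b ^ 2"
  proof -
    have "b powr a * b powr (- (a - 2)) = b powr 2" using b by (simp add: powr_add[symmetric])
    also have "\<dots> = b ^ 2" using b by (simp add: powr_numeral)
    finally show ?thesis .
  qed
  have G: "Gamma (a - 2) > 0" using a by simp
  have "b powr a / Gamma a * (1 / z) * (D * (D + 1) * z) * (Gamma (a - 2) * b powr (- (a - 2)))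
      = (b powr a * b powr (- (a - 2))) * (D * (D + 1)) * Gamma (a - 2) / Gamma a"
    using z by (simp add: divide_simps mult_ac)
  also have "\<dots> = b ^ 2 * (D * (D + 1)) * Gamma (a - 2) / ((a - 1) * (a - 2) * Gamma (a - 2))"
    unfolding bp Gamma_rec2[OF a] ..
  also have "\<dots> = D * (D + 1) * b ^ 2 / ((a - 1) * (a - 2))"
    using G by (simp add: mult_ac)
  finally show ?thesis .
qed

lemma sm_nn:
  assumes a: "a > 2" and b: "b > 0"
  shows "(\<integral>\<^sup>+x. ennreal (norm x ^ 2 * marg_pdf a b (x::real^'d::finite)) \<partial>lborel)
     = ennreal (real CARD('d) * ((real CARD('d) + 1) * b ^ 2 / ((a - 1) * (a - 2))))"
proof -
  define D where "D = real CARD('d)"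
  define c0 where "c0 = KK TYPE('d) a b * (D * (D + 1) * zz TYPE('d))"
  have a0: "a > 0" using a by simp
  have "(\<integral>\<^sup>+x. ennreal (norm x ^ 2 * marg_pdf a b (x::real^'d::finite)) \<partial>lborel)
      = (\<integral>\<^sup>+x. (\<integral>\<^sup>+g. ennreal (KK TYPE('d) a b * norm (x::real^'d) ^ 2 * gk (a + real CARD('d)) (b + norm x) g) \<partial>lborel) \<partial>lborel)"
    by (rule nn_integral_cong) (rule step1[OF a0 b])
  also have "\<dots> = (\<integral>\<^sup>+g. (\<integral>\<^sup>+x. ennreal (KK TYPE('d) a b * norm (x::real^'d) ^ 2 * gk (a + real CARD('d)) (b + norm x) g) \<partial>lborel) \<partial>lborel)"
    apply (rule Fub[symmetric]) unfolding gk_def by measurable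
  also have "\<dots> = (\<integral>\<^sup>+g. ennreal c0 * ennreal (gk (a - 2) b g) \<partial>lborel)"
    unfolding c0_def D_def by (rule nn_integral_cong) (rule step3[OF a b, where 'd='d])
  also have "\<dots> = ennreal c0 * ennreal (Gamma (a - 2) * b powr (- (a - 2)))"
    using a b by (simp add: nn_integral_cmult gk_nn)
  also have "\<dots> = ennreal (c0 * (Gamma (a - 2) * b powr (- (a - 2))))"
    using a b zz_pos[where 'd='d] KK_pos[OF a0 b, where 'd='d]
    by (simp add: ennreal_mult c0_def D_def)
  also have "c0 * (Gamma (a - 2) * b powr (- (a - 2))) = D * ((D + 1) * b ^ 2 / ((a - 1) * (a - 2)))"
    using marg_arith[OF a b zz_pos[where 'd='d], of D] unfolding c0_def KK_def cnorm_val
    by (simp add: mult_ac)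
  finally show ?thesis by (simp add: D_def)
qed

lemma marg_fun:
  assumes a: "a > 0" and b: "b > 0"
  shows "marg_pdf a b = (\<lambda>x::real^'d::finite. KK TYPE('d) a b * Gamma (a + real CARD('d)) * (b + norm x) powr (- (a + real CARD('d))))"
  using marg_val[OF a b] by (intro ext) simp

lemma marg_measurable:
  assumes a: "a > 0" and b: "b > 0"
  shows "(marg_pdf a b :: real^'d::finite \<Rightarrow> real) \<in> borel_measurable borel"
  unfolding marg_fun[OF a b] by measurable

lemma marg_nonneg:
  assumes a: "a > 0" and b: "b > 0"
  shows "marg_pdf a b (x::real^'d::finite) \<ge> 0"
  unfolding marg_fun[OF a b] using KK_pos[OF a b, where 'd='d] a by simp

lemma int_sq:
  assumes a: "a > 2" and b: "b > 0"
  shows "integrable lborel (\<lambda>x::real^'d::finite. norm x ^ 2 * marg_pdf a b x)"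
    "(\<integral>x. norm x ^ 2 * marg_pdf a b (x::real^'d::finite) \<partial>lborel) = real CARD('d) * ((real CARD('d) + 1) * b ^ 2 / ((a - 1) * (a - 2)))"
proof -
  have a0: "a > 0" using a by simp
  have [measurable]: "(marg_pdf a b :: real^'d::finite \<Rightarrow> real) \<in> borel_measurable borel"
    by (rule marg_measurable[OF a0 b])
  have nn: "0 \<le> real CARD('d) * ((real CARD('d) + 1) * b ^ 2 / ((a - 1) * (a - 2)))"
    using a by simp
  have "integrable lborel (\<lambda>x::real^'d::finite. norm x ^ 2 * marg_pdf a b x) \<and>
    (\<integral>x. norm x ^ 2 * marg_pdf a b (x::real^'d::finite) \<partial>lborel) = real CARD('d) * ((real CARD('d) + 1) * b ^ 2 / ((a - 1) * (a - 2)))"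
    using nn_integral_eq_integrable[of "\<lambda>x::real^'d. norm x ^ 2 * marg_pdf a b x" lborel, OF _ _ nn] sm_nn[OF a b, where 'd='d]
      marg_nonneg[OF a0 b, where 'd='d] by simp
  then show "integrable lborel (\<lambda>x::real^'d::finite. norm x ^ 2 * marg_pdf a b x)"
    "(\<integral>x. norm x ^ 2 * marg_pdf a b (x::real^'d::finite) \<partial>lborel) = real CARD('d) * ((real CARD('d) + 1) * b ^ 2 / ((a - 1) * (a - 2)))"
    by auto
qed

lemma int_ij:
  assumes a: "a > 2" and b: "b > 0"
  shows "integrable lborel (\<lambda>x::real^'d::finite. x $ i * x $ j * marg_pdf a b x)"
proof (rule Bochner_Integration.integrable_bound[OF int_sq(1)[OF a b]])
  have a0: "a > 0" using a by simp
  have [measurable]: "(marg_pdf a b :: real^'d::finite \<Rightarrow> real) \<in> borel_measurable borel"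
    by (rule marg_measurable[OF a0 b])
  show "(\<lambda>x::real^'d::finite. x $ i * x $ j * marg_pdf a b x) \<in> borel_measurable lborel" by measurable
  show "AE x in lborel. norm (x $ i * x $ j * marg_pdf a b x) \<le> norm (norm x ^ 2 * marg_pdf a b (x::real^'d))"
  proof (intro AE_I2)
    fix x :: "real^'d"
    have m: "marg_pdf a b x \<ge> 0" by (rule marg_nonneg[OF a0 b])
    have "\<bar>x $ i\<bar> * \<bar>x $ j\<bar> \<le> norm x * norm x"
      by (intro mult_mono component_le_norm_cart) auto
    then have "\<bar>x $ i\<bar> * \<bar>x $ j\<bar> * marg_pdf a b x \<le> norm x ^ 2 * marg_pdf a b x"
      using m by (simp add: power2_eq_square mult_right_mono)
    then show "norm (x $ i * x $ j * marg_pdf a b x) \<le> norm (norm x ^ 2 * marg_pdf a b (x::real^'d))"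
      using m by (simp add: abs_mult)
  qed
qed

lemma norm_reflv: "norm (reflv i x) = norm (x::real^'d::finite)"
proof -
  have "(\<lambda>k. \<bar>(if k = i then - 1 else 1) * x $ k\<bar>) = (\<lambda>k. \<bar>x $ k\<bar>)"
    by (auto simp: abs_mult)
  then show ?thesis unfolding norm_vec_def reflv_def by simp
qed

lemma norm_swapv: "norm (swapv i j x) = norm (x::real^'d::finite)"
proof -
  have "(\<Sum>k\<in>UNIV. (norm (x $ sw i j k))\<^sup>2) = (\<Sum>k\<in>UNIV. (norm (x $ k))\<^sup>2)"
    using sum.reindex_bij_betw[of "sw i j" UNIV UNIV "\<lambda>k. (norm (x $ k))\<^sup>2"] bij_sw[of i j]
    by (simp add: bij_def bij_betw_def)
  then show ?thesis unfolding norm_vec_def swapv_def L2_set_def by simp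
qed

lemma int_reflv:
  fixes f :: "real^'d::finite \<Rightarrow> real"
  assumes [measurable]: "f \<in> borel_measurable borel"
  shows "(\<integral>x. f (reflv i x) \<partial>lborel) = (\<integral>x. f x \<partial>lborel)"
proof -
  have "integral\<^sup>L (distr lborel borel (reflv i)) f = (\<integral>x. f (reflv i x) \<partial>lborel)"
    by (rule integral_distr) measurable
  then show ?thesis unfolding lborel_reflv by simp
qed

lemma int_swapv:
  fixes f :: "real^'d::finite \<Rightarrow> real"
  assumes [measurable]: "f \<in> borel_measurable borel"
  shows "(\<integral>x. f (swapv i j x) \<partial>lborel) = (\<integral>x. f x \<partial>lborel)"
proof -
  have "integral\<^sup>L (distr lborel borel (swapv i j)) f = (\<integral>x. f (swapv i j x) \<partial>lborel)"
    by (rule integral_distr) measurable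
  then show ?thesis unfolding lborel_swapv by simp
qed

lemma sm_offdiag:
  assumes a: "a > 2" and b: "b > 0" and ij: "i \<noteq> j"
  shows "second_moment a b i (j::'d::finite) = 0"
proof -
  have a0: "a > 0" using a by simp
  have [measurable]: "(marg_pdf a b :: real^'d::finite \<Rightarrow> real) \<in> borel_measurable borel"
    by (rule marg_measurable[OF a0 b])
  have mr: "marg_pdf a b (reflv i x) = marg_pdf a b x" for x :: "real^'d"
    unfolding marg_fun[OF a0 b] norm_reflv ..
  have "second_moment a b i j = (\<integral>x. (reflv i x) $ i * (reflv i x) $ j * marg_pdf a b (reflv i x) \<partial>lborel)"
    unfolding second_moment_def by (rule int_reflv[symmetric]) measurable
  also have "\<dots> = (\<integral>x. - (x $ i * x $ j * marg_pdf a b x) \<partial>lborel)"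
    using ij by (simp only: mr) (simp add: reflv_def)
  also have "\<dots> = - second_moment a b i j"
    unfolding second_moment_def by (rule integral_minus)
  finally show ?thesis by simp
qed

lemma sm_diag_eq:
  assumes a: "a > 2" and b: "b > 0"
  shows "second_moment a b (i::'d::finite) i = second_moment a b k (k::'d)"
proof -
  have a0: "a > 0" using a by simp
  have [measurable]: "(marg_pdf a b :: real^'d::finite \<Rightarrow> real) \<in> borel_measurable borel"
    by (rule marg_measurable[OF a0 b])
  have mr: "marg_pdf a b (swapv i k x) = marg_pdf a b x" for x :: "real^'d"
    unfolding marg_fun[OF a0 b] norm_swapv ..
  have "second_moment a b i i = (\<integral>x. (swapv i k x) $ i * (swapv i k x) $ i * marg_pdf a b (swapv i k x) \<partial>lborel)"
    unfolding second_moment_def by (rule int_swapv[symmetric]) measurable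
  also have "\<dots> = second_moment a b k k"
    unfolding second_moment_def by (simp only: mr) (simp add: swapv_def sw_def)
  finally show ?thesis .
qed

lemma sm_diag:
  assumes a: "a > 2" and b: "b > 0"
  shows "second_moment a b i (i::'d::finite) = (real CARD('d) + 1) * b ^ 2 / ((a - 1) * (a - 2))"
proof -
  have "(\<Sum>k\<in>UNIV. second_moment a b k (k::'d)) = (\<integral>x. (\<Sum>k\<in>UNIV. x $ k * x $ k * marg_pdf a b (x::real^'d)) \<partial>lborel)"
    unfolding second_moment_def
    by (rule Bochner_Integration.integral_sum[where f="\<lambda>k x. x $ k * x $ k * marg_pdf a b (x::real^'d)" and I=UNIV and M=lborel, OF int_ij[OF a b], symmetric])
  also have "\<dots> = (\<integral>x. norm x ^ 2 * marg_pdf a b (x::real^'d) \<partial>lborel)"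
    by (simp add: power2_norm_eq_inner inner_vec_def sum_distrib_right)
  also have "\<dots> = real CARD('d) * ((real CARD('d) + 1) * b ^ 2 / ((a - 1) * (a - 2)))"
    by (rule int_sq(2)[OF a b])
  finally have S: "(\<Sum>k\<in>UNIV. second_moment a b k (k::'d)) = real CARD('d) * ((real CARD('d) + 1) * b ^ 2 / ((a - 1) * (a - 2)))" .
  have "(\<Sum>k\<in>UNIV. second_moment a b k (k::'d)) = (\<Sum>k::'d\<in>UNIV. second_moment a b i i)"
    by (rule sum.cong[OF refl], rule sm_diag_eq[OF a b])
  also have "\<dots> = real CARD('d) * second_moment a b i i" by simp
  finally have "real CARD('d) * second_moment a b i i = real CARD('d) * ((real CARD('d) + 1) * b ^ 2 / ((a - 1) * (a - 2)))"
    using S by simp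
  moreover have "real CARD('d) \<noteq> 0" by simp
  ultimately show ?thesis using mult_left_cancel by blast
qed

lemma ee: "axis k 1 \<bullet> (A *v axis l 1) = (A :: real^'m::finite^'n::finite) $ k $ l"
  by (simp add: inner_axis' matrix_vector_mult_basis column_def)

lemma psd_trace_pos:
  fixes A :: "real^'m::finite^'m"
  assumes p: "psd A" and nz: "A \<noteq> 0"
  shows "trace A > 0"
proof -
  have sym: "A $ i $ j = A $ j $ i" for i j
  proof -
    have "transpose A $ i $ j = A $ i $ j" using p unfolding psd_def by simp
    then show ?thesis by (simp add: transpose_def)
  qed
  have pos: "v \<bullet> (A *v v) \<ge> 0" for v using p unfolding psd_def by simp
  have diag: "A $ i $ i \<ge> 0" for i using pos[of "axis i 1"] by (simp add: ee)
  have quad: "0 \<le> A $ i $ i + 2 * t * A $ i $ j + t ^ 2 * A $ j $ j" for i j t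
  proof -
    have "(axis i 1 + t *\<^sub>R axis j 1) \<bullet> (A *v (axis i 1 + t *\<^sub>R axis j 1))
      = A $ i $ i + t * A $ i $ j + t * A $ j $ i + t ^ 2 * A $ j $ j"
      by (simp add: matrix_vector_right_distrib matrix_vector_mult_scaleR inner_add_left inner_add_right ee
          power2_eq_square algebra_simps)
    then show ?thesis using pos[of "axis i 1 + t *\<^sub>R axis j 1"] sym[of j i] by simp
  qed
  have "trace A \<ge> 0" unfolding trace_def by (intro sum_nonneg diag)
  moreover have "trace A \<noteq> 0"
  proof
    assume t0: "trace A = 0"
    have d0: "A $ i $ i = 0" for i
      using t0 diag unfolding trace_def by (simp add: sum_nonneg_eq_0_iff)
    have "A $ i $ j = 0" for i j
    proof (cases "i = j")
      case True then show ?thesis using d0 by simp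
    next
      case False
      have "0 \<le> 2 * (- A $ i $ j) * A $ i $ j" using quad[of i "- A $ i $ j" j] d0 by simp
      then have "(A $ i $ j) ^ 2 \<le> 0" by (simp add: power2_eq_square)
      then show ?thesis by simp
    qed
    then have "A = 0" by (simp add: vec_eq_iff)
    with nz show False by simp
  qed
  ultimately show ?thesis by simp
qed

lemma frob_pos:
  fixes L :: "real^'n::finite^'m::finite"
  assumes "L \<noteq> 0"
  shows "frob_norm L > 0"
proof -
  obtain i j where ij: "L $ i $ j \<noteq> 0" using assms by (auto simp: vec_eq_iff)
  have "(\<Sum>j\<in>UNIV. (L $ i $ j)\<^sup>2) > 0"
    by (rule sum_pos2[of UNIV j]) (use ij in auto)
  then have "(\<Sum>i\<in>UNIV. \<Sum>j\<in>UNIV. (L $ i $ j)\<^sup>2) > 0"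
    by (intro sum_pos2[of UNIV i]) (auto intro: sum_nonneg)
  then show ?thesis unfolding frob_norm_def by simp
qed

theorem mainTheorem2:
  fixes a b :: real
    and SNR :: real and Gxi :: "real^'m::finite^'m" and q :: nat and L :: "real^'d::finite^'m"
  assumes a: "a > 2" and b: "b > 0"
  shows "(\<exists>C>0. \<forall>x::real^'d. marg_pdf a b x = C * (b + norm x) powr (- (a + real CARD('d))))
    \<and> (\<forall>i j::'d. integrable lborel (\<lambda>x::real^'d. (x $ i) * (x $ j) * marg_pdf a b x)
         \<and> second_moment a b i j
             = (if i = j then (real CARD('d) + 1) * b^2 / ((a - 1) * (a - 2)) else 0))
    \<and> ((SNR > 1 \<and> psd Gxi \<and> Gxi \<noteq> 0 \<and> q \<ge> 1 \<and> L \<noteq> 0) \<longrightarrow>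
         ((\<forall>i j::'d. second_moment a b i j
              = (if i = j then (SNR - 1) * trace Gxi / (real q * (frob_norm L)^2) else 0))
          \<longleftrightarrow> b = sqrt ((a - 1) * (a - 2) * (SNR - 1) * trace Gxi
                        / ((real CARD('d) + 1) * real q * (frob_norm L)^2))))"
proof -
  have a0: "a > 0" using a by simp
  define m where "m = (real CARD('d) + 1) * b^2 / ((a - 1) * (a - 2))"
  have P1: "\<exists>C>0. \<forall>x::real^'d. marg_pdf a b x = C * (b + norm x) powr (- (a + real CARD('d)))"
    using KK_pos[OF a0 b, where 'd='d] a0 marg_val[OF a0 b, where 'd='d]
    by (intro exI[of _ "KK TYPE('d) a b * Gamma (a + real CARD('d))"]) simp
  have SM: "second_moment a b i j = (if i = j then m else 0)" for i j :: 'd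
    using sm_diag[OF a b] sm_offdiag[OF a b] unfolding m_def by auto
  have P2: "\<forall>i j::'d. integrable lborel (\<lambda>x::real^'d. (x $ i) * (x $ j) * marg_pdf a b x)
         \<and> second_moment a b i j
             = (if i = j then (real CARD('d) + 1) * b^2 / ((a - 1) * (a - 2)) else 0)"
    using int_ij[OF a b] SM unfolding m_def by auto
  have P3: "(\<forall>i j::'d. second_moment a b i j
              = (if i = j then (SNR - 1) * trace Gxi / (real q * (frob_norm L)^2) else 0))
          \<longleftrightarrow> b = sqrt ((a - 1) * (a - 2) * (SNR - 1) * trace Gxi
                        / ((real CARD('d) + 1) * real q * (frob_norm L)^2))"
    if H: "SNR > 1 \<and> psd Gxi \<and> Gxi \<noteq> 0 \<and> q \<ge> 1 \<and> L \<noteq> 0"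
  proof -
    define T where "T = (SNR - 1) * trace Gxi / (real q * (frob_norm L)^2)"
    have tr: "trace Gxi > 0" using psd_trace_pos H by blast
    have fr: "frob_norm L > 0" using frob_pos H by blast
    have T: "T > 0" using H tr fr unfolding T_def by (intro divide_pos_pos mult_pos_pos) auto
    have e1: "(\<forall>i j::'d. second_moment a b i j = (if i = j then T else 0)) \<longleftrightarrow> m = T"
      unfolding SM by (metis (full_types))
    have P: "(a - 1) * (a - 2) > 0" using a by simp
    have e2: "(a - 1) * (a - 2) * (SNR - 1) * trace Gxi / ((real CARD('d) + 1) * real q * (frob_norm L)^2)
        = (a - 1) * (a - 2) * T / (real CARD('d) + 1)"
      unfolding T_def by (simp add: field_simps)
    have "m = T \<longleftrightarrow> b ^ 2 = (a - 1) * (a - 2) * T / (real CARD('d) + 1)"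
      unfolding m_def using P by (auto simp: field_simps)
    also have "\<dots> \<longleftrightarrow> b = sqrt ((a - 1) * (a - 2) * T / (real CARD('d) + 1))"
    proof
      assume "b ^ 2 = (a - 1) * (a - 2) * T / (real CARD('d) + 1)"
      then show "b = sqrt ((a - 1) * (a - 2) * T / (real CARD('d) + 1))"
        using b by (metis abs_of_pos real_sqrt_abs)
    next
      assume "b = sqrt ((a - 1) * (a - 2) * T / (real CARD('d) + 1))"
      then show "b ^ 2 = (a - 1) * (a - 2) * T / (real CARD('d) + 1)"
        using P T by simp
    qed
    finally show ?thesis using e1 e2 unfolding T_def by simp
  qed
  show ?thesis using P1 P2 P3 by blast
qed

end
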